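(* Let $T$ be a tree on $n\ge7$ vertices such that every leaf $v$ of $T$ satisfies both $|N_2(v)|>\lceil n/2\rceil-4$ and $|N_{\ge4}(v)|<|N_2(v)|+4-\lceil n/2\rceil$. Then $T$ has diameter at most $3$.
   Context: For a vertex $v$ of a tree, $N_i(v)$ is the set of vertices at distance exactly $i$ from $v$ and $N_{\ge i}(v)$ the set of vertices at distance at least $i$ from $v$. The diameter of $T$ is the maximum distance between two of its vertices. *)

theory Defs
  imports Complex_Main
begin

definition simple_graph :: "'a set \<Rightarrow> ('a \<Rightarrow> 'a \<Rightarrow> bool) \<Rightarrow> bool" where
  "simple_graph V E \<longleftrightarrow> finite V \<and> (\<forall>u v. E u v \<longrightarrow> u \<in> V \<and> v \<in> V)
     \<and> (\<forall>u v. E u v \<longrightarrow> E v u) \<and> (\<forall>v. \<not> E v v)"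

definition edges :: "'a set \<Rightarrow> ('a \<Rightarrow> 'a \<Rightarrow> bool) \<Rightarrow> 'a set set" where
  "edges V E = {{u, v} | u v. u \<in> V \<and> v \<in> V \<and> E u v}"

definition is_walk :: "'a set \<Rightarrow> ('a \<Rightarrow> 'a \<Rightarrow> bool) \<Rightarrow> 'a list \<Rightarrow> bool" where
  "is_walk V E p \<longleftrightarrow> p \<noteq> [] \<and> set p \<subseteq> V \<and> (\<forall>i. Suc i < length p \<longrightarrow> E (p ! i) (p ! Suc i))"

definition connected_graph :: "'a set \<Rightarrow> ('a \<Rightarrow> 'a \<Rightarrow> bool) \<Rightarrow> bool" where
  "connected_graph V E \<longleftrightarrow> (\<forall>u\<in>V. \<forall>v\<in>V. \<exists>p. is_walk V E p \<and> hd p = u \<and> last p = v)"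

definition is_tree :: "'a set \<Rightarrow> ('a \<Rightarrow> 'a \<Rightarrow> bool) \<Rightarrow> bool" where
  "is_tree V E \<longleftrightarrow> simple_graph V E \<and> V \<noteq> {} \<and> connected_graph V E
     \<and> card (edges V E) + 1 = card V"

definition gdist :: "'a set \<Rightarrow> ('a \<Rightarrow> 'a \<Rightarrow> bool) \<Rightarrow> 'a \<Rightarrow> 'a \<Rightarrow> nat" where
  "gdist V E u v = (LEAST k. \<exists>p. is_walk V E p \<and> hd p = u \<and> last p = v \<and> length p = Suc k)"

definition degree :: "'a set \<Rightarrow> ('a \<Rightarrow> 'a \<Rightarrow> bool) \<Rightarrow> 'a \<Rightarrow> nat" where
  "degree V E v = card {u \<in> V. E v u}"

definition leaf :: "'a set \<Rightarrow> ('a \<Rightarrow> 'a \<Rightarrow> bool) \<Rightarrow> 'a \<Rightarrow> bool" where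
  "leaf V E v \<longleftrightarrow> v \<in> V \<and> degree V E v = 1"

definition sphere :: "'a set \<Rightarrow> ('a \<Rightarrow> 'a \<Rightarrow> bool) \<Rightarrow> 'a \<Rightarrow> nat \<Rightarrow> 'a set" where
  "sphere V E v i = {u \<in> V. gdist V E v u = i}"

definition far_set :: "'a set \<Rightarrow> ('a \<Rightarrow> 'a \<Rightarrow> bool) \<Rightarrow> 'a \<Rightarrow> nat \<Rightarrow> 'a set" where
  "far_set V E v i = {u \<in> V. gdist V E v u \<ge> i}"

definition diameter :: "'a set \<Rightarrow> ('a \<Rightarrow> 'a \<Rightarrow> bool) \<Rightarrow> nat" where
  "diameter V E = Max {gdist V E u v | u v. u \<in> V \<and> v \<in> V}"

end

theory Submission
  imports Defs
begin

lemma walk_append: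
  assumes "is_walk V E p" "E (last p) y" "y \<in> V"
  shows "is_walk V E (p @ [y])"
  unfolding is_walk_def
proof (intro conjI allI impI)
  show "p @ [y] \<noteq> []" by simp
  show "set (p @ [y]) \<subseteq> V" using assms unfolding is_walk_def by auto
  fix i assume i: "Suc i < length (p @ [y])"
  have pne: "p \<noteq> []" using assms(1) unfolding is_walk_def by auto
  show "E ((p @ [y]) ! i) ((p @ [y]) ! Suc i)"
  proof (cases "Suc i < length p")
    case True
    then show ?thesis using assms(1) unfolding is_walk_def by (simp add: nth_append)
  next
    case False
    then have "i = length p - 1" using i by simp
    then show ?thesis using assms(2) pne by (simp add: nth_append last_conv_nth)
  qed
qed

lemma walk_butlast:
  assumes "is_walk V E p" "length p \<ge> 2"
  shows "is_walk V E (butlast p)"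
proof -
  have "butlast p \<noteq> []" using assms(2) by (cases p) auto
  then show ?thesis using assms unfolding is_walk_def
    by (auto simp: nth_butlast dest: in_set_butlastD)
qed

lemma walk_rev:
  assumes "is_walk V E p" "\<forall>a b. E a b \<longrightarrow> E b a"
  shows "is_walk V E (rev p)"
  unfolding is_walk_def
proof (intro conjI allI impI)
  show "rev p \<noteq> []" "set (rev p) \<subseteq> V" using assms unfolding is_walk_def by auto
  fix i assume i: "Suc i < length (rev p)"
  have "E (p ! (length p - Suc (Suc i))) (p ! Suc (length p - Suc (Suc i)))"
    using assms(1) i unfolding is_walk_def by auto
  moreover have "Suc (length p - Suc (Suc i)) = length p - Suc i" using i by simp
  ultimately show "E (rev p ! i) (rev p ! Suc i)" using i assms(2)
    by (simp add: rev_nth)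
qed

context
  fixes V :: "'a set" and E :: "'a \<Rightarrow> 'a \<Rightarrow> bool"
  assumes T: "is_tree V E"
begin

lemma sg: "simple_graph V E" using T unfolding is_tree_def by auto
lemma conn: "connected_graph V E" using T unfolding is_tree_def by auto
lemma inV: "E a b \<Longrightarrow> a \<in> V \<and> b \<in> V" using sg unfolding simple_graph_def by auto
lemma symE: "\<forall>a b. E a b \<longrightarrow> E b a" using sg unfolding simple_graph_def by auto
lemma irr: "\<not> E a a" using sg unfolding simple_graph_def by auto
lemma finV: "finite V" using sg unfolding simple_graph_def by auto

lemma dist_attain:
  assumes "u \<in> V" "v \<in> V"
  shows "\<exists>p. is_walk V E p \<and> hd p = u \<and> last p = v \<and> length p = Suc (gdist V E u v)"
proof -
  obtain p where p: "is_walk V E p" "hd p = u" "last p = v"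
    using conn assms unfolding connected_graph_def by blast
  then have "p \<noteq> []" unfolding is_walk_def by auto
  then have "\<exists>k p. is_walk V E p \<and> hd p = u \<and> last p = v \<and> length p = Suc k"
    using p by (intro exI[of _ "length p - 1"] exI[of _ p]) auto
  then show ?thesis unfolding gdist_def by (rule LeastI_ex)
qed

lemma dist_le:
  assumes "is_walk V E p" "hd p = u" "last p = v"
  shows "gdist V E u v \<le> length p - 1"
proof -
  have "p \<noteq> []" using assms unfolding is_walk_def by auto
  then show ?thesis unfolding gdist_def
    by (intro Least_le exI[of _ p]) (use assms in auto)
qed

lemma dist_self: "u \<in> V \<Longrightarrow> gdist V E u u = 0"
  using dist_le[of "[u]" u u] unfolding is_walk_def by auto

lemma dist_zero:
  assumes "u \<in> V" "v \<in> V" "gdist V E u v = 0" shows "u = v"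
proof -
  obtain p where p: "is_walk V E p" "hd p = u" "last p = v" "length p = 1"
    using dist_attain[OF assms(1,2)] assms(3) by auto
  then obtain x where "p = [x]" by (cases p) auto
  then show ?thesis using p by auto
qed

lemma dist_sym_le:
  assumes "u \<in> V" "v \<in> V" shows "gdist V E v u \<le> gdist V E u v"
proof -
  obtain p where p: "is_walk V E p" "hd p = u" "last p = v" "length p = Suc (gdist V E u v)"
    using dist_attain[OF assms] by auto
  have "p \<noteq> []" using p unfolding is_walk_def by auto
  then show ?thesis using dist_le[OF walk_rev[OF p(1) symE], of v u] p
    by (simp add: hd_rev last_rev)
qed

lemma dist_sym: "u \<in> V \<Longrightarrow> v \<in> V \<Longrightarrow> gdist V E u v = gdist V E v u"
  using dist_sym_le by (meson antisym)

lemma dist_adj: assumes "E a b" shows "gdist V E a b = 1"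
proof -
  have ab: "a \<in> V" "b \<in> V" using inV assms by auto
  have "is_walk V E [a, b]" using ab assms unfolding is_walk_def
    by (auto simp: less_Suc_eq)
  then have "gdist V E a b \<le> 1" using dist_le[of "[a,b]" a b] by auto
  moreover have "a \<noteq> b" using irr assms by auto
  then have "gdist V E a b \<noteq> 0" using dist_zero ab by auto
  ultimately show ?thesis by simp
qed

lemma ex_parent:
  assumes u: "u \<in> V" and y: "y \<in> V" and yu: "y \<noteq> u"
  shows "\<exists>z. z \<in> V \<and> E y z \<and> gdist V E u z + 1 = gdist V E u y"
proof -
  obtain p where p: "is_walk V E p" "hd p = u" "last p = y" "length p = Suc (gdist V E u y)"
    using dist_attain[OF u y] by auto
  have "gdist V E u y \<noteq> 0" using dist_zero[OF u y] yu by auto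
  then have len: "length p \<ge> 2" using p by simp
  define z where "z = p ! (length p - 2)"
  have wb: "is_walk V E (butlast p)" using walk_butlast[OF p(1) len] .
  have "butlast p \<noteq> []" using len by (cases p) auto
  then have hb: "hd (butlast p) = u" using p(2) len
    by (cases p) auto
  have "butlast p \<noteq> []" using len by (cases p) auto
  then have lb: "last (butlast p) = z" using len unfolding z_def
    by (simp add: last_conv_nth nth_butlast numeral_2_eq_2)
  have d1: "gdist V E u z \<le> length p - 2"
    using dist_le[OF wb hb lb] by simp
  have "E (p ! (length p - 2)) (p ! Suc (length p - 2))"
    using p(1) len unfolding is_walk_def by auto
  moreover have "Suc (length p - 2) = length p - 1" using len by simp
  moreover have "p \<noteq> []" using len by auto
  then have "p ! (length p - 1) = y" using p(3) by (simp add: last_conv_nth)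
  ultimately have Ezy: "E z y" unfolding z_def by simp
  then have zV: "z \<in> V" using inV by auto
  obtain q where q: "is_walk V E q" "hd q = u" "last q = z" "length q = Suc (gdist V E u z)"
    using dist_attain[OF u zV] by auto
  have "is_walk V E (q @ [y])" using walk_append[OF q(1)] q(3) Ezy y by simp
  then have "gdist V E u y \<le> length (q @ [y]) - 1"
    using dist_le[of "q @ [y]" u y] q by (cases q) auto
  then have "gdist V E u y \<le> gdist V E u z + 1" using q by simp
  then show ?thesis using d1 p(4) zV Ezy symE \<open>gdist V E u y \<noteq> 0\<close>
    by (intro exI[of _ z]) auto
qed

lemma finE: "finite (edges V E)"
proof -
  have "edges V E \<subseteq> (\<lambda>(a,b). {a,b}) ` (V \<times> V)" unfolding edges_def by auto
  then show ?thesis using finV finite_subset by blast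
qed

lemma tree_parent:
  assumes u: "u \<in> V" and y: "y \<in> V" and yu: "y \<noteq> u"
  shows "\<exists>z. E y z \<and> gdist V E u z + 1 = gdist V E u y \<and>
     (\<forall>z'. E y z' \<and> z' \<noteq> z \<longrightarrow> gdist V E u z' = gdist V E u y + 1)"
proof -
  define par where "par y = (SOME z. z \<in> V \<and> E y z \<and> gdist V E u z + 1 = gdist V E u y)" for y
  have par: "par x \<in> V \<and> E x (par x) \<and> gdist V E u (par x) + 1 = gdist V E u x"
    if "x \<in> V - {u}" for x
  proof -
    have "\<exists>z. z \<in> V \<and> E x z \<and> gdist V E u z + 1 = gdist V E u x"
    proof -
      have xV: "x \<in> V" using that by (rule DiffD1)
      have xu: "x \<noteq> u" using that by (metis Diff_iff insertI1)
      show ?thesis by (rule ex_parent[OF u xV xu])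
    qed
    then show ?thesis unfolding par_def by (rule someI_ex)
  qed
  define f where "f x = {x, par x}" for x
  have inj: "inj_on f (V - {u})"
  proof (rule inj_onI)
    fix a b assume a: "a \<in> V - {u}" and b: "b \<in> V - {u}" and fab: "f a = f b"
    show "a = b"
    proof (rule ccontr)
      assume "a \<noteq> b"
      then have "a = par b \<and> b = par a" using fab unfolding f_def by (auto simp: doubleton_eq_iff)
      then have h1: "a = par b" and h2: "b = par a" by blast+
      have e1: "gdist V E u (par b) + 1 = gdist V E u b" using par[OF b] by blast
      have e2: "gdist V E u (par a) + 1 = gdist V E u a" using par[OF a] by blast
      show False using e1[folded h1] e2[folded h2] by linarith
    qed
  qed
  have sub: "f ` (V - {u}) \<subseteq> edges V E"
    unfolding edges_def f_def using par by blast
  have "card (f ` (V - {u})) = card V - 1"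
    using card_image[OF inj] u finV by simp
  also have "\<dots> = card (edges V E)" using T unfolding is_tree_def by linarith
  finally have eq: "f ` (V - {u}) = edges V E"
    using card_subset_eq[OF finE sub] by simp
  have yU: "y \<in> V - {u}" using y yu by simp
  show ?thesis
  proof (intro exI[of _ "par y"] conjI allI impI)
    show "E y (par y)" "gdist V E u (par y) + 1 = gdist V E u y" using par[OF yU] by auto
    fix z' assume z': "E y z' \<and> z' \<noteq> par y"
    then have "{y, z'} \<in> edges V E" unfolding edges_def using inV by blast
    then obtain y' where y': "y' \<in> V - {u}" "{y, z'} = {y', par y'}"
      using eq unfolding f_def by blast
    then have "y = par y' \<and> z' = y'" using z' by (auto simp: doubleton_eq_iff)
    then have h1: "y = par y'" and h2: "z' = y'" by blast+
    have "gdist V E u (par y') + 1 = gdist V E u y'" using par[OF y'(1)] by blast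
    then show "gdist V E u z' = gdist V E u y + 1" unfolding h1[symmetric] h2 by linarith
  qed
qed

lemma core:
  assumes u: "u \<in> V" and w: "w \<in> V" and D: "gdist V E u w = D" and D4: "4 \<le> D"
    and M: "\<forall>a\<in>V. \<forall>b\<in>V. gdist V E a b \<le> D"
  shows "leaf V E w \<and> card (sphere V E w 2) \<le> card (far_set V E u 4)"
proof -
  have wu: "w \<noteq> u" using D D4 dist_self u by auto
  obtain q where q: "E w q" "gdist V E u q + 1 = D"
    and oth: "\<forall>z'. E w z' \<and> z' \<noteq> q \<longrightarrow> gdist V E u z' = D + 1"
    using tree_parent[OF u w wu] D by auto
  have qV: "q \<in> V" using inV q by auto
  have Nw: "{z \<in> V. E w z} = {q}"
  proof -
    have False if z: "z \<in> V" "E w z" "z \<noteq> q" for z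
    proof -
      have "gdist V E u z = D + 1" using oth z(2,3) by blast
      moreover have "gdist V E u z \<le> D" using M u z(1) by blast
      ultimately show False by linarith
    qed
    then show ?thesis using qV q by blast
  qed
  have leafw: "leaf V E w" unfolding leaf_def degree_def using Nw w by simp
  have qu: "q \<noteq> u" using q D4 dist_self u by auto
  obtain q' where q': "E q q'"
    and oth': "\<forall>x. E q x \<and> x \<noteq> q' \<longrightarrow> gdist V E u x = gdist V E u q + 1"
    using tree_parent[OF u qV qu] by auto
  define N where "N = {x \<in> V. E q x}"
  have finN: "finite N" unfolding N_def using finV by simp
  have S: "sphere V E w 2 \<subseteq> N - {w}"
  proof
    fix x assume "x \<in> sphere V E w 2"
    then have x: "x \<in> V" "gdist V E w x = 2" unfolding sphere_def by auto
    have xw: "x \<noteq> w" using x dist_self w by auto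
    obtain z where z: "E x z" "gdist V E w z + 1 = 2"
      using tree_parent[OF w x(1) xw] x by auto
    have zV: "z \<in> V" using inV z by auto
    have zw: "z \<noteq> w" using z dist_self w by auto
    obtain z0 where z0: "E z z0" "gdist V E w z0 + 1 = gdist V E w z"
      using tree_parent[OF w zV zw] by auto
    have "z0 \<in> V" using inV z0 by auto
    then have "z0 = w" using dist_zero[OF w] z0 z by auto
    then have "E w z" using z0 symE by auto
    then have "z = q" using Nw zV by auto
    then show "x \<in> N - {w}" unfolding N_def using z x xw symE by auto
  qed
  have F: "N - {q'} \<subseteq> far_set V E u 4"
  proof
    fix x assume "x \<in> N - {q'}"
    then have "x \<in> V" "E q x" "x \<noteq> q'" unfolding N_def by auto
    then show "x \<in> far_set V E u 4" unfolding far_set_def using oth' q D4 by auto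
  qed
  have wN: "w \<in> N" unfolding N_def using w q symE by auto
  have q'N: "q' \<in> N" unfolding N_def using q' inV by auto
  have finF: "finite (far_set V E u 4)" unfolding far_set_def using finV by simp
  have "card (sphere V E w 2) \<le> card (N - {w})" using S finN by (intro card_mono) auto
  also have "\<dots> = card (N - {q'})" using wN q'N finN by simp
  also have "\<dots> \<le> card (far_set V E u 4)" using F finF by (intro card_mono) auto
  finally show ?thesis using leafw by simp
qed

end

theorem mainTheorem15:
  fixes V :: "'a set" and E :: "'a \<Rightarrow> 'a \<Rightarrow> bool" and n :: nat
  assumes "is_tree V E"
    and "card V = n" and "n \<ge> 7"
    and "\<forall>v. leaf V E v \<longrightarrow>
           int (card (sphere V E v 2)) > \<lceil>real n / 2\<rceil> - 4 \<and>
           int (card (far_set V E v 4)) < int (card (sphere V E v 2)) + 4 - \<lceil>real n / 2\<rceil>"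
  shows "diameter V E \<le> 3"
proof (rule ccontr)
  assume nd: "\<not> diameter V E \<le> 3"
  note T = assms(1)
  define A where "A = {gdist V E u v | u v. u \<in> V \<and> v \<in> V}"
  have "A = (\<lambda>(u,v). gdist V E u v) ` (V \<times> V)" unfolding A_def by auto
  then have finA: "finite A" using finV[OF T] by simp
  have "V \<noteq> {}" using T unfolding is_tree_def by auto
  then have neA: "A \<noteq> {}" unfolding A_def by auto
  define D where "D = diameter V E"
  have "D \<in> A" unfolding D_def diameter_def A_def[symmetric] using Max_in[OF finA neA] .
  then obtain u w where uw: "u \<in> V" "w \<in> V" "gdist V E u w = D" unfolding A_def by auto
  have M: "\<forall>a\<in>V. \<forall>b\<in>V. gdist V E a b \<le> D"
    unfolding D_def diameter_def A_def[symmetric] using Max_ge[OF finA] unfolding A_def by blast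
  have D4: "4 \<le> D" using nd D_def by simp
  have wu: "gdist V E w u = D" using dist_sym[OF T uw(1,2)] uw by simp
  have c1: "leaf V E w \<and> card (sphere V E w 2) \<le> card (far_set V E u 4)"
    using core[OF T uw D4 M] .
  have c2: "leaf V E u \<and> card (sphere V E u 2) \<le> card (far_set V E w 4)"
    using core[OF T uw(2) uw(1) wu D4 M] .
  define c where "c = \<lceil>real n / 2\<rceil>"
  have "real n / 2 > 3" using assms(3) by simp
  then have c4: "c \<ge> 4" unfolding c_def by linarith
  have h1: "int (card (far_set V E w 4)) < int (card (sphere V E w 2)) + 4 - c"
    using assms(4) c1 unfolding c_def by blast
  have h2: "int (card (far_set V E u 4)) < int (card (sphere V E u 2)) + 4 - c"
    using assms(4) c2 unfolding c_def by blast
  show False using h1 h2 c1 c2 c4 by linarith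
qed

end
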